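(* Let $r\ge 2$ and let $\mathcal{H}=\{H_1,\ldots,H_n\}$ be a collection of $n$ matchings, each of size $N$, in an $r$-uniform hypergraph. Let $m$ be the size of a maximum rainbow matching for $\mathcal{H}$. Then $$(n-m)\frac{2N-(r+1)m}{r-1}\leq\frac12\binom{2r}{r}m.$$
   Context: A hypergraph is $r$-uniform if every edge contains exactly $r$ vertices. A matching is a set of pairwise vertex-disjoint edges. Given a collection (repetitions allowed) of matchings $H_1,\dots,H_n$ in a hypergraph, a matching $M\subseteq \bigcup_{i=1}^n H_i$ is rainbow if there is an injection $\phi:M\to[n]$ such that every edge $e\in M$ belongs to $H_{\phi(e)}$. *)

theory Defs
  imports Complex_Main
begin

definition matching :: "'v set set \<Rightarrow> bool" where
  "matching M \<longleftrightarrow> (\<forall>e\<in>M. \<forall>f\<in>M. e \<noteq> f \<longrightarrow> e \<inter> f = {})"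

definition uniform :: "nat \<Rightarrow> 'v set set \<Rightarrow> bool" where
  "uniform r E \<longleftrightarrow> (\<forall>e\<in>E. finite e \<and> card e = r)"

text \<open>The collection is H 1, ..., H n (indexed by {1..n}, repetitions allowed).\<close>
definition rainbow_matching :: "nat \<Rightarrow> (nat \<Rightarrow> 'v set set) \<Rightarrow> 'v set set \<Rightarrow> bool" where
  "rainbow_matching n H M \<longleftrightarrow> matching M \<and> M \<subseteq> (\<Union>i\<in>{1..n}. H i) \<and>
     (\<exists>\<phi>. inj_on \<phi> M \<and> \<phi> ` M \<subseteq> {1..n} \<and> (\<forall>e\<in>M. e \<in> H (\<phi> e)))"

definition max_rainbow :: "nat \<Rightarrow> (nat \<Rightarrow> 'v set set) \<Rightarrow> nat" where
  "max_rainbow n H = Max {card M | M. rainbow_matching n H M}"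

end

theory Submission
  imports Defs
begin

lemma binom_id:
  assumes "b \<ge> 1"
  shows "real b / real ((a + (b - 1)) choose a) = real (a + b) / real ((a + b) choose a)"
proof -
  have "(a + b - a) * ((a + b) choose a) = (a + b) * ((a + b - 1) choose a)"
    by (rule binomial_absorb_comp)
  hence e: "real b * real ((a + b) choose a) = real (a + b) * real ((a + (b - 1)) choose a)"
    using assms by (metis add_diff_cancel_left' Nat.add_diff_assoc of_nat_mult)
  have p1: "real ((a + (b - 1)) choose a) > 0" by simp
  have p2: "real ((a + b) choose a) > 0" by simp
  show ?thesis using e p1 p2 by (simp add: field_simps)
qed

lemma bollobas:
  fixes A B :: "'i \<Rightarrow> 'a set"
  assumes "finite X" "finite I"
    "\<forall>i\<in>I. A i \<subseteq> X \<and> B i \<subseteq> X \<and> A i \<inter> B i = {}"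
    "\<forall>i\<in>I. \<forall>k\<in>I. i \<noteq> k \<longrightarrow> A i \<inter> B k \<noteq> {}"
  shows "(\<Sum>i\<in>I. 1 / real (card (A i) + card (B i) choose card (A i))) \<le> 1"
  using assms
proof (induction "card X" arbitrary: X I B rule: less_induct)
  case less
  note fX = less.prems(1) and fI = less.prems(2) and sub = less.prems(3) and cross = less.prems(4)
  show ?case
  proof (cases "I = {}")
    case True thus ?thesis by simp
  next
    case Ine: False
  show ?thesis
  proof (cases "\<exists>i\<in>I. B i = {}")
    case True
    then obtain i where i: "i \<in> I" "B i = {}" by blast
    have "I = {i}" using cross i by blast
    thus ?thesis using i by simp
  next
    case False
    hence Bne: "\<forall>i\<in>I. B i \<noteq> {}" by blast
    then have Xne: "X \<noteq> {}" using sub Ine by blast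
    define g where "g i x = 1 / real (card (A i) + card (B i - {x}) choose card (A i))" for i x
    have IH: "(\<Sum>i\<in>{i\<in>I. x \<notin> A i}. g i x) \<le> 1" if x: "x \<in> X" for x
    proof -
      have "(\<Sum>i\<in>{i\<in>I. x \<notin> A i}. 1 / real (card (A i) + card ((\<lambda>i. B i - {x}) i) choose card (A i))) \<le> 1"
      proof (rule less.hyps[of "X - {x}"])
        show "card (X - {x}) < card X" using x fX by (meson card_Diff1_less)
        show "finite (X - {x})" using fX by simp
        show "finite {i \<in> I. x \<notin> A i}" using fI by simp
        show "\<forall>i\<in>{i \<in> I. x \<notin> A i}. A i \<subseteq> X - {x} \<and> B i - {x} \<subseteq> X - {x} \<and> A i \<inter> (B i - {x}) = {}"
          using sub by blast
        show "\<forall>i\<in>{i \<in> I. x \<notin> A i}. \<forall>k\<in>{i \<in> I. x \<notin> A i}. i \<noteq> k \<longrightarrow> A i \<inter> (B k - {x}) \<noteq> {}"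
          using cross by blast
      qed
      thus ?thesis by (simp add: g_def)
    qed
    have "(\<Sum>x\<in>X. \<Sum>i\<in>{i\<in>I. x \<notin> A i}. g i x) \<le> (\<Sum>x\<in>X. 1)"
      by (rule sum_mono) (rule IH)
    also have "\<dots> = real (card X)" by simp
    finally have S1: "(\<Sum>x\<in>X. \<Sum>i\<in>{i\<in>I. x \<notin> A i}. g i x) \<le> real (card X)" .
    have sw: "(\<Sum>x\<in>X. \<Sum>i\<in>{i\<in>I. x \<notin> A i}. g i x) = (\<Sum>i\<in>I. \<Sum>x\<in>{x\<in>X. x \<notin> A i}. g i x)"
      using fX fI by (rule sum.swap_restrict)
    have inner: "(\<Sum>x\<in>{x\<in>X. x \<notin> A i}. g i x) = real (card X) * (1 / real (card (A i) + card (B i) choose card (A i)))"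
      if i: "i \<in> I" for i
    proof -
      let ?a = "card (A i)" and ?b = "card (B i)"
      have fB: "finite (B i)" and fA: "finite (A i)" using sub i fX finite_subset by blast+
      have bge: "?b \<ge> 1" using Bne i fB by (simp add: Suc_le_eq card_gt_0_iff)
      have split: "{x\<in>X. x \<notin> A i} = B i \<union> (X - A i - B i)" using sub i by blast
      have "(\<Sum>x\<in>{x\<in>X. x \<notin> A i}. g i x) = (\<Sum>x\<in>B i. g i x) + (\<Sum>x\<in>X - A i - B i. g i x)"
        unfolding split by (rule sum.union_disjoint) (use fB fX in auto)
      also have "(\<Sum>x\<in>B i. g i x) = (\<Sum>x\<in>B i. 1 / real (?a + (?b - 1) choose ?a))"
        by (rule sum.cong) (use fB in \<open>auto simp: g_def\<close>)
      also have "\<dots> = real ?b / real (?a + (?b - 1) choose ?a)" by simp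
      also have "\<dots> = real (?a + ?b) / real (?a + ?b choose ?a)" using bge by (rule binom_id)
      also have "(\<Sum>x\<in>X - A i - B i. g i x) = (\<Sum>x\<in>X - A i - B i. 1 / real (?a + ?b choose ?a))"
        by (rule sum.cong) (auto simp: g_def)
      also have "\<dots> = real (card (X - A i - B i)) / real (?a + ?b choose ?a)" by simp
      also have "card (X - A i - B i) = card X - ?a - ?b"
      proof -
        have "card (X - A i - B i) = card (X - A i) - card (B i)"
          using sub i fX fB by (subst card_Diff_subset) auto
        also have "card (X - A i) = card X - ?a" using sub i fA by (simp add: card_Diff_subset)
        finally show ?thesis .
      qed
      also have "real (?a + ?b) / real (?a + ?b choose ?a) + real (card X - ?a - ?b) / real (?a + ?b choose ?a)
          = real (?a + ?b + (card X - ?a - ?b)) / real (?a + ?b choose ?a)"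
        by (simp add: add_divide_distrib)
      also have "?a + ?b + (card X - ?a - ?b) = card X"
      proof -
        have "card (A i \<union> B i) = ?a + ?b" using sub i fA fB by (simp add: card_Un_disjoint)
        moreover have "card (A i \<union> B i) \<le> card X" using sub i fX by (intro card_mono) auto
        ultimately show ?thesis by linarith
      qed
      finally show ?thesis by simp
    qed
    have "(\<Sum>i\<in>I. \<Sum>x\<in>{x\<in>X. x \<notin> A i}. g i x) = real (card X) * (\<Sum>i\<in>I. 1 / real (card (A i) + card (B i) choose card (A i)))"
      using inner by (simp add: sum_distrib_left)
    with S1 sw have "real (card X) * (\<Sum>i\<in>I. 1 / real (card (A i) + card (B i) choose card (A i))) \<le> real (card X) * 1"
      by simp
    moreover have "real (card X) > 0" using Xne fX by (simp add: card_gt_0_iff)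
    ultimately show ?thesis by simp
  qed
  qed
qed


lemma two_elems: "2 \<le> card A \<Longrightarrow> \<exists>x y. x\<in>A \<and> y\<in>A \<and> x\<noteq>y"
  by (metis One_nat_def card.infinite card_le_Suc0_iff_eq not_less_eq_eq numeral_2_eq_2 zero_le)

lemma card_filter_sum: "finite A \<Longrightarrow> card {x\<in>A. P x} = (\<Sum>x\<in>A. if P x then 1 else 0)"
  by (simp add: sum.inter_filter[symmetric])

theorem lemma2p1:
  fixes H :: "nat \<Rightarrow> 'v set set" and r n N m :: nat
  assumes "r \<ge> 2"
    and "uniform r (\<Union>i\<in>{1..n}. H i)"
    and "\<And>i. i \<in> {1..n} \<Longrightarrow> matching (H i) \<and> finite (H i) \<and> card (H i) = N"
    and "m = max_rainbow n H"
  shows "(real n - real m) * ((2 * real N - (real r + 1) * real m) / (real r - 1))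
           \<le> 1/2 * real ((2*r) choose r) * real m"
proof -
  define U0 where "U0 = (\<Union>i\<in>{1..n}. H i)"
  have Hi: "\<And>i. i \<in> {1..n} \<Longrightarrow> matching (H i) \<and> finite (H i) \<and> card (H i) = N" by (rule assms(3))
  have fU0: "finite U0" unfolding U0_def using Hi by auto
  have unif: "\<And>e. e \<in> U0 \<Longrightarrow> finite e \<and> card e = r" using assms(2) unfolding uniform_def U0_def by blast
  have nonemp: "\<And>e. e \<in> U0 \<Longrightarrow> e \<noteq> {}" using unif assms(1) by fastforce
  let ?C = "{card M | M. rainbow_matching n H M}"
  have "?C \<subseteq> {..card U0}"
  proof
    fix c assume "c \<in> ?C"
    then obtain M where "rainbow_matching n H M" "c = card M" by blast
    hence "M \<subseteq> U0" unfolding rainbow_matching_def U0_def by blast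
    thus "c \<in> {..card U0}" using \<open>c = card M\<close> fU0 by (simp add: card_mono)
  qed
  hence Cfin: "finite ?C" using finite_subset by blast
  have "rainbow_matching n H {}" unfolding rainbow_matching_def matching_def by simp
  hence Cne: "?C \<noteq> {}" by blast
  have maxle: "\<And>M. rainbow_matching n H M \<Longrightarrow> card M \<le> m"
    unfolding assms(4) max_rainbow_def using Cfin by (intro Max_ge) auto
  have "m \<in> ?C" unfolding assms(4) max_rainbow_def using Cfin Cne by (rule Max_in)
  then obtain M where RM: "rainbow_matching n H M" and cM: "card M = m" by blast
  then obtain \<phi> where inj: "inj_on \<phi> M" and phiM: "\<phi> ` M \<subseteq> {1..n}" and inH: "\<forall>e\<in>M. e \<in> H (\<phi> e)"
    and matM: "matching M" and MU0: "M \<subseteq> U0"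
    unfolding rainbow_matching_def U0_def by blast
  have fM: "finite M" using MU0 fU0 finite_subset by blast
  define U where "U = {1..n} - \<phi> ` M"
  have cphi: "card (\<phi> ` M) = m" using inj cM by (simp add: card_image)
  have mn: "m \<le> n" using card_mono[OF _ phiM] cphi by simp
  have cU: "card U = n - m" unfolding U_def using phiM cphi fM by (subst card_Diff_subset) auto
  have fU: "finite U" unfolding U_def by simp
  define V where "V = \<Union>M"
  have fV: "finite V" unfolding V_def using fM MU0 unif by blast
  have disjM: "\<And>e e'. e \<in> M \<Longrightarrow> e' \<in> M \<Longrightarrow> e \<noteq> e' \<Longrightarrow> e \<inter> e' = {}"
    using matM unfolding matching_def by blast
  have HU0: "\<And>j. j \<in> U \<Longrightarrow> H j \<subseteq> U0" unfolding U_def U0_def by blast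
  have disjH: "\<And>j f g. j \<in> U \<Longrightarrow> f \<in> H j \<Longrightarrow> g \<in> H j \<Longrightarrow> f \<noteq> g \<Longrightarrow> f \<inter> g = {}"
    using Hi unfolding U_def matching_def by blast
  define P where "P j e = {f \<in> H j. f \<inter> e \<noteq> {} \<and> (\<forall>e'\<in>M. e' \<noteq> e \<longrightarrow> f \<inter> e' = {})}" for j e
  define T where "T j = {e\<in>M. 2 \<le> card (P j e)}" for j
  define S where "S e = {j\<in>U. 2 \<le> card (P j e)}" for e

  have meet: "f \<inter> V \<noteq> {}" if j: "j \<in> U" and f: "f \<in> H j" for j f
  proof (rule ccontr)
    assume "\<not> f \<inter> V \<noteq> {}"
    hence fV0: "f \<inter> V = {}" by simp
    have fne: "f \<noteq> {}" using nonemp HU0 j f by blast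
    have fnM: "f \<notin> M" using fV0 fne unfolding V_def by blast
    define \<psi> where "\<psi> = \<phi>(f := j)"
    have jn: "j \<in> {1..n}" "j \<notin> \<phi> ` M" using j unfolding U_def by auto
    have "rainbow_matching n H (insert f M)"
      unfolding rainbow_matching_def
    proof (intro conjI exI[of _ \<psi>])
      show "matching (insert f M)" using matM fV0 unfolding matching_def V_def by blast
      show "insert f M \<subseteq> (\<Union>i\<in>{1..n}. H i)" using RM jn f unfolding rainbow_matching_def by blast
      show "inj_on \<psi> (insert f M)" unfolding \<psi>_def using inj jn fnM
        by (auto simp: inj_on_def)
      show "\<psi> ` insert f M \<subseteq> {1..n}" unfolding \<psi>_def using phiM jn fnM by auto
      show "\<forall>e\<in>insert f M. e \<in> H (\<psi> e)" unfolding \<psi>_def using inH f fnM by auto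
    qed
    hence "card (insert f M) \<le> m" by (rule maxle)
    thus False using fnM fM cM by simp
  qed

  have augpair: "f \<inter> g \<noteq> {}" if e: "e \<in> M" and j: "j \<in> U" and k: "k \<in> U" and jk: "j \<noteq> k"
    and f: "f \<in> P j e" and g: "g \<in> P k e" for e j k f g
  proof (rule ccontr)
    assume "\<not> f \<inter> g \<noteq> {}"
    hence fg: "f \<inter> g = {}" by simp
    have fH: "f \<in> H j" and gH: "g \<in> H k" using f g unfolding P_def by auto
    have fne: "f \<noteq> {}" using nonemp HU0 j fH by blast
    have gne: "g \<noteq> {}" using nonemp HU0 k gH by blast
    have fpriv: "\<forall>e'\<in>M. e' \<noteq> e \<longrightarrow> f \<inter> e' = {}" using f unfolding P_def by auto
    have gpriv: "\<forall>e'\<in>M. e' \<noteq> e \<longrightarrow> g \<inter> e' = {}" using g unfolding P_def by auto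
    have fnM: "f \<notin> M - {e}" using fpriv fne by blast
    have gnM: "g \<notin> M - {e}" using gpriv gne by blast
    have fneg: "f \<noteq> g" using fg fne by blast
    define \<psi> where "\<psi> = \<phi>(f := j, g := k)"
    have jn: "j \<in> {1..n}" "j \<notin> \<phi> ` M" using j unfolding U_def by auto
    have kn: "k \<in> {1..n}" "k \<notin> \<phi> ` M" using k unfolding U_def by auto
    have "rainbow_matching n H (insert f (insert g (M - {e})))"
      unfolding rainbow_matching_def
    proof (intro conjI exI[of _ \<psi>])
      show "matching (insert f (insert g (M - {e})))" unfolding matching_def
      proof (intro ballI impI)
        fix x y assume x: "x \<in> insert f (insert g (M - {e}))" and y: "y \<in> insert f (insert g (M - {e}))"
          and xy: "x \<noteq> y"
        from x y xy show "x \<inter> y = {}"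
        proof (elim insertE)
          qed (use fpriv gpriv fg disjM in \<open>auto simp: Int_commute\<close>)
      qed
      show "insert f (insert g (M - {e})) \<subseteq> (\<Union>i\<in>{1..n}. H i)"
        using RM jn kn fH gH unfolding rainbow_matching_def by blast
      show "inj_on \<psi> (insert f (insert g (M - {e})))"
      proof -
        have psiM: "\<forall>x\<in>M-{e}. \<psi> x = \<phi> x" unfolding \<psi>_def using fnM gnM by auto
        have i1: "inj_on \<psi> (M - {e})" 
        proof -
          have "inj_on \<phi> (M - {e})" using inj by (rule inj_on_subset) auto
          thus ?thesis using psiM unfolding inj_on_def by (metis)
        qed
        have im: "\<psi> ` (M - {e}) \<subseteq> \<phi> ` M" using psiM by auto
        have pg: "\<psi> g = k" and pf: "\<psi> f = j" unfolding \<psi>_def using fneg by auto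
        have i2: "inj_on \<psi> (insert g (M - {e}))" using i1 im pg kn by (simp add: inj_on_insert) blast
        have "\<psi> ` (insert g (M - {e}) - {f}) \<subseteq> insert k (\<phi> ` M)" using im pg by auto
        hence "\<psi> f \<notin> \<psi> ` (insert g (M - {e}) - {f})" using pf jn jk by blast
        thus ?thesis using i2 by (simp add: inj_on_insert)
      qed
      show "\<psi> ` insert f (insert g (M - {e})) \<subseteq> {1..n}" unfolding \<psi>_def using phiM jn kn fnM gnM by auto
      show "\<forall>x\<in>insert f (insert g (M - {e})). x \<in> H (\<psi> x)" unfolding \<psi>_def using inH fH gH fnM gnM fneg by auto
    qed
    hence "card (insert f (insert g (M - {e}))) \<le> m" by (rule maxle)
    moreover have "card (insert f (insert g (M - {e}))) = m + 1"

    proof -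
      have c1: "card (M - {e}) = m - 1" using fM cM e by simp
      have m1: "m \<ge> 1" using fM cM e by (metis One_nat_def Suc_leI card_gt_0_iff empty_iff)
      have fin: "finite (M - {e})" using fM by simp
      have "card (insert g (M - {e})) = m" using gnM fin c1 m1 by simp
      moreover have "f \<notin> insert g (M - {e})" using fnM fneg by simp
      ultimately show ?thesis using fin by simp
    qed
    ultimately show False by simp
  qed

  have cardP: "card (P j e) \<le> r" if j: "j \<in> U" and e: "e \<in> M" for j e
  proof -
    define pick where "pick f = (SOME x. x \<in> f \<inter> e)" for f
    have pk: "pick f \<in> f \<inter> e" if "f \<in> P j e" for f

    proof -
      have "f \<inter> e \<noteq> {}" using that unfolding P_def by auto
      thus ?thesis unfolding pick_def by (metis ex_in_conv someI_ex)
    qed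
    have "inj_on pick (P j e)"
    proof (rule inj_onI)
      fix f g assume "f \<in> P j e" "g \<in> P j e" "pick f = pick g"
      moreover have "f \<in> H j" "g \<in> H j" using \<open>f \<in> P j e\<close> \<open>g \<in> P j e\<close> unfolding P_def by auto
      ultimately show "f = g"
      proof -
        assume a: "f \<in> P j e" "g \<in> P j e" "pick f = pick g" "f \<in> H j" "g \<in> H j"
        have "pick f \<in> f \<inter> g" using pk[OF a(1)] pk[OF a(2)] a(3) by simp
        thus "f = g" using disjH[OF j a(4) a(5)] by auto
      qed
    qed
    moreover have "pick ` P j e \<subseteq> e" using pk by blast
    ultimately have "card (P j e) \<le> card e" using unif MU0 e by (intro card_inj_on_le) auto
    thus ?thesis using unif MU0 e by auto
  qed

  have claimA: "2 * N \<le> (r + 1) * m + (r - 1) * card (T j)" if j: "j \<in> U" for j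
  proof -
    have jn: "j \<in> {1..n}" using j unfolding U_def by auto
    have fH: "finite (H j)" and cH: "card (H j) = N" using Hi[OF jn] by auto
    define Priv where "Priv = (\<Union>e\<in>M. P j e)"
    have fPriv: "finite Priv" unfolding Priv_def P_def using fH fM by auto
    have sumV: "(\<Sum>f\<in>H j. card (f \<inter> V)) \<le> r * m"
    proof -
      have "(\<Sum>f\<in>H j. card (f \<inter> V)) = card (\<Union>f\<in>H j. f \<inter> V)"
        using fH fV disjH[OF j] by (subst card_UN_disjoint) blast+
      also have "\<dots> \<le> card V" using fV by (intro card_mono) auto
      also have "\<dots> \<le> (\<Sum>e\<in>M. card e)" unfolding V_def using fM MU0 unif
        by (intro card_Union_le_sum_card)
      also have "\<dots> = (\<Sum>e\<in>M. r)" using MU0 unif by (intro sum.cong) auto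
      finally show ?thesis using cM by (simp add: mult.commute)
    qed
    have perf: "2 \<le> card (f \<inter> V) + (if f \<in> Priv then 1 else 0)" if f: "f \<in> H j" for f
    proof -
      obtain x e where x: "x \<in> f" "e \<in> M" "x \<in> e" using meet[OF j f] unfolding V_def by blast
      have fin: "finite (f \<inter> V)" using fV by simp
      show ?thesis
      proof (cases "f \<in> Priv")
        case True
        have "card (f \<inter> V) \<ge> 1" using fin x unfolding V_def
          by (metis One_nat_def Suc_leI card_gt_0_iff empty_iff IntI UnionI)
        thus ?thesis using True by simp
      next
        case False
        hence "f \<notin> P j e" using x unfolding Priv_def by blast
        then obtain e' where e': "e' \<in> M" "e' \<noteq> e" "f \<inter> e' \<noteq> {}" using f x unfolding P_def by blast
        then obtain y where y: "y \<in> f" "y \<in> e'" by blast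
        have "x \<noteq> y" using disjM[OF x(2) e'(1)] e' x y by blast
        hence "{x, y} \<subseteq> f \<inter> V" using x y e' unfolding V_def by blast
        hence "card {x, y} \<le> card (f \<inter> V)" using fin by (intro card_mono)
        thus ?thesis using \<open>x \<noteq> y\<close> by simp
      qed
    qed
    have "2 * N = (\<Sum>f\<in>H j. 2)" using cH by simp
    also have "\<dots> \<le> (\<Sum>f\<in>H j. card (f \<inter> V) + (if f \<in> Priv then 1 else 0))"
      by (rule sum_mono) (rule perf)
    also have "\<dots> = (\<Sum>f\<in>H j. card (f \<inter> V)) + card {f\<in>H j. f \<in> Priv}"
      using fH by (simp add: sum.distrib card_filter_sum)
    also have "card {f\<in>H j. f \<in> Priv} \<le> card Priv" using fPriv by (intro card_mono) auto
    also have "card Priv \<le> (\<Sum>e\<in>M. card (P j e))" unfolding Priv_def using fM by (rule card_UN_le)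
    also have "\<dots> \<le> (\<Sum>e\<in>M. 1 + (if e \<in> T j then r - 1 else 0))"
    proof (rule sum_mono)
      fix e assume e: "e \<in> M"
      show "card (P j e) \<le> 1 + (if e \<in> T j then r - 1 else 0)"
        using cardP[OF j e] e assms(1) unfolding T_def by auto
    qed
    also have "\<dots> = m + (r - 1) * card (T j)"

    proof -
      have "(\<Sum>e\<in>M. 1 + (if e \<in> T j then r - 1 else 0)) = (\<Sum>e\<in>M. 1) + (\<Sum>e\<in>M. (if e \<in> T j then r - 1 else 0))"
        by (rule sum.distrib)
      also have "(\<Sum>e\<in>M. (if e \<in> T j then r - 1 else 0)) = (\<Sum>e\<in>{e\<in>M. e \<in> T j}. r - 1)"
        using fM by (rule sum.inter_filter[symmetric])
      also have "{e\<in>M. e \<in> T j} = T j" unfolding T_def by auto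
      finally show ?thesis using cM by simp
    qed
    finally show ?thesis using sumV by (simp add: algebra_simps)
  qed

  have claimB: "2 * card (S e) \<le> (2*r choose r)" if e: "e \<in> M" for e
  proof -
    have ex: "\<forall>j\<in>S e. \<exists>p. fst p \<in> P j e \<and> snd p \<in> P j e \<and> fst p \<noteq> snd p"
    proof
      fix j assume "j \<in> S e"
      hence "2 \<le> card (P j e)" unfolding S_def by simp
      then obtain x y where "x \<in> P j e" "y \<in> P j e" "x \<noteq> y" using two_elems by blast
      thus "\<exists>p. fst p \<in> P j e \<and> snd p \<in> P j e \<and> fst p \<noteq> snd p" by (intro exI[of _ "(x, y)"]) simp
    qed
    obtain F where F: "\<forall>j\<in>S e. fst (F j) \<in> P j e \<and> snd (F j) \<in> P j e \<and> fst (F j) \<noteq> snd (F j)"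
      using bchoice[OF ex] by blast
    define A where "A = (\<lambda>(j::nat, b::bool). if b then fst (F j) else snd (F j))"
    define B where "B = (\<lambda>(j::nat, b::bool). if b then snd (F j) else fst (F j))"
    define I where "I = S e \<times> (UNIV :: bool set)"
    have SU: "S e \<subseteq> U" unfolding S_def by auto
    have fS: "finite (S e)" using fU SU finite_subset by blast
    have fI: "finite I" unfolding I_def using fS by simp
    have PU0: "\<And>j f. j \<in> U \<Longrightarrow> f \<in> P j e \<Longrightarrow> f \<in> U0" using HU0 unfolding P_def by blast
    have AB: "A i \<in> P (fst i) e \<and> B i \<in> P (fst i) e \<and> A i \<noteq> B i" if i: "i \<in> I" for i
    proof -
      obtain j b where ij: "i = (j, b)" by (cases i)
      have j: "j \<in> S e" using i ij unfolding I_def by simp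
      show ?thesis using F j unfolding ij A_def B_def by auto
    qed
    have AU0: "A i \<in> U0 \<and> B i \<in> U0 \<and> fst i \<in> U" if i: "i \<in> I" for i
    proof -
      have "fst i \<in> U" using i SU unfolding I_def by auto
      thus ?thesis using AB[OF i] PU0 by blast
    qed
    have fX: "finite (\<Union>U0)" using fU0 unif by blast
    have "(\<Sum>i\<in>I. 1 / real (card (A i) + card (B i) choose card (A i))) \<le> 1"
    proof (rule bollobas[of "\<Union>U0"])
      show "finite (\<Union>U0)" by (rule fX)
      show "finite I" by (rule fI)
      show "\<forall>i\<in>I. A i \<subseteq> \<Union>U0 \<and> B i \<subseteq> \<Union>U0 \<and> A i \<inter> B i = {}"
      proof
        fix i assume i: "i \<in> I"
        have "A i \<in> H (fst i)" "B i \<in> H (fst i)" using AB[OF i] unfolding P_def by auto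
        hence "A i \<inter> B i = {}" using disjH AU0[OF i] AB[OF i] by blast
        thus "A i \<subseteq> \<Union>U0 \<and> B i \<subseteq> \<Union>U0 \<and> A i \<inter> B i = {}" using AU0[OF i] by blast
      qed
      show "\<forall>i\<in>I. \<forall>k\<in>I. i \<noteq> k \<longrightarrow> A i \<inter> B k \<noteq> {}"
      proof (intro ballI impI)
        fix i k assume i: "i \<in> I" and k: "k \<in> I" and ik: "i \<noteq> k"
        obtain j b where ij: "i = (j, b)" by (cases i)
        obtain j' b' where kj: "k = (j', b')" by (cases k)
        show "A i \<inter> B k \<noteq> {}"
        proof (cases "j = j'")
          case True
          hence "b' = (\<not> b)" using ik ij kj by auto
          hence "A i = B k" unfolding ij kj A_def B_def using True by auto
          thus ?thesis using nonemp AU0[OF i] by auto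
        next
          case False
          show ?thesis
            using augpair[OF e, of j j' "A i" "B k"] AU0[OF i] AU0[OF k] AB[OF i] AB[OF k] False ij kj by simp
        qed
      qed
    qed
    also have "(\<Sum>i\<in>I. 1 / real (card (A i) + card (B i) choose card (A i))) = (\<Sum>i\<in>I. 1 / real ((2*r) choose r))"
    proof (rule sum.cong[OF refl])
      fix i assume i: "i \<in> I"
      have "card (A i) = r" "card (B i) = r" using unif AU0[OF i] by auto
      thus "1 / real (card (A i) + card (B i) choose card (A i)) = 1 / real ((2*r) choose r)" by (simp add: mult_2)
    qed
    also have "\<dots> = real (card I) / real ((2*r) choose r)" by simp
    also have "card I = 2 * card (S e)" unfolding I_def using fS by (simp add: card_cartesian_product)
    finally have "real (2 * card (S e)) / real ((2*r) choose r) \<le> 1" .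
    moreover have "real ((2*r) choose r) > 0" by simp
    ultimately have "real (2 * card (S e)) \<le> real ((2*r) choose r)" by (simp add: divide_le_eq)
    thus ?thesis by (simp only: of_nat_le_iff)
  qed

  have dc: "(\<Sum>j\<in>U. card (T j)) = (\<Sum>e\<in>M. card (S e))"
  proof -
    have "(\<Sum>j\<in>U. card (T j)) = (\<Sum>j\<in>U. \<Sum>e\<in>M. if 2 \<le> card (P j e) then 1 else 0)"
      unfolding T_def by (rule sum.cong[OF refl], rule card_filter_sum[OF fM])
    also have "\<dots> = (\<Sum>e\<in>M. \<Sum>j\<in>U. if 2 \<le> card (P j e) then 1 else 0)" by (rule sum.swap)
    also have "\<dots> = (\<Sum>e\<in>M. card (S e))"
      unfolding S_def by (rule sum.cong[OF refl], rule card_filter_sum[OF fU, symmetric])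
    finally show ?thesis .
  qed

  define K where "K = (2 * real N - (real r + 1) * real m) / (real r - 1)"
  have Kle: "K \<le> real (card (T j))" if j: "j \<in> U" for j
  proof -
    have "real (2 * N) \<le> real ((r + 1) * m + (r - 1) * card (T j))"
      using claimA[OF j] by (simp only: of_nat_le_iff)
    hence h: "2 * real N \<le> (real r + 1) * real m + (real r - 1) * real (card (T j))"
      using assms(1) by (simp add: of_nat_diff distrib_right)
    have rp: "real r - 1 > 0" using assms(1) by simp
    show ?thesis unfolding K_def using h rp by (simp add: divide_le_eq algebra_simps)
  qed
  have sumS: "2 * (\<Sum>e\<in>M. card (S e)) \<le> m * ((2*r) choose r)"
  proof -
    have "2 * (\<Sum>e\<in>M. card (S e)) = (\<Sum>e\<in>M. 2 * card (S e))" by (simp add: sum_distrib_left)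
    also have "\<dots> \<le> (\<Sum>e\<in>M. (2*r) choose r)" by (rule sum_mono) (rule claimB)
    also have "\<dots> = m * ((2*r) choose r)" using cM by simp
    finally show ?thesis .
  qed
  have "(real n - real m) * K = real (card U) * K" using cU mn by simp
  also have "\<dots> = (\<Sum>j\<in>U. K)" by simp
  also have "\<dots> \<le> (\<Sum>j\<in>U. real (card (T j)))" by (rule sum_mono) (rule Kle)
  also have "\<dots> = real (\<Sum>e\<in>M. card (S e))" using dc by (metis of_nat_sum)
  also have "\<dots> \<le> 1/2 * real ((2*r) choose r) * real m"
  proof -
    have "real (2 * (\<Sum>e\<in>M. card (S e))) \<le> real (m * ((2*r) choose r))" using sumS by (simp only: of_nat_le_iff)
    thus ?thesis by (simp add: mult.commute)
  qed
  finally show ?thesis unfolding K_def .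
qed

end
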